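(* Let $M$ and $N$ be monoids with finite generating sets $X$ and $Y$ respectively, and let $f:(M,d_X)\to(N,d_Y)$ be a quasi-isometric embedding. If $S\subseteq M$ is infinite, then $f(S)$ is infinite.
   Context: For a monoid $M$ generated by a finite set $X$, $d_X(x,y)=\inf\{|w|:w\in X^*,\ xw=y\}$, where $X^*$ is the free monoid on $X$ and $\inf\emptyset=\infty$. A map $f:(M,d_X)\to(N,d_Y)$ is a quasi-isometric embedding if there are constants $1\le\lambda<\infty$, $0<\epsilon<\infty$ with $\frac1\lambda d_X(x,y)-\epsilon\le d_Y(f(x),f(y))\le\lambda d_X(x,y)+\epsilon$ for all $x,y\in M$ (with $\infty$ absorbing addition and multiplication by positive reals). *)

theory Defs
  imports Main "HOL-Library.Extended_Real"
begin

definition generated_by :: "'a::monoid_mult set \<Rightarrow> bool" where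
  "generated_by X \<longleftrightarrow> (\<forall>m. \<exists>w. set w \<subseteq> X \<and> prod_list w = m)"

text \<open>Directed word distance d_X(x,y) = inf{|w| : w in X^*, x w = y}, with inf of empty set = infinity.\<close>
definition word_dist :: "'a::monoid_mult set \<Rightarrow> 'a \<Rightarrow> 'a \<Rightarrow> enat" where
  "word_dist X x y = (INF w \<in> {w. set w \<subseteq> X \<and> x * prod_list w = y}. enat (length w))"

text \<open>Quasi-isometric embedding; infinity absorbs addition and multiplication by positive reals (ereal arithmetic).\<close>
definition qi_embedding :: "'a::monoid_mult set \<Rightarrow> 'b::monoid_mult set \<Rightarrow> ('a \<Rightarrow> 'b) \<Rightarrow> bool" where
  "qi_embedding X Y f \<longleftrightarrow> (\<exists>lam eps::real. 1 \<le> lam \<and> 0 < eps \<and>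
     (\<forall>x y. ereal (1/lam) * ereal_of_enat (word_dist X x y) - ereal eps
               \<le> ereal_of_enat (word_dist Y (f x) (f y))
           \<and> ereal_of_enat (word_dist Y (f x) (f y))
               \<le> ereal lam * ereal_of_enat (word_dist X x y) + ereal eps))"

end

theory Submission
  imports Defs
begin

lemma wd_attain:
  assumes "word_dist X x s = enat k"
  shows "\<exists>w. set w \<subseteq> X \<and> x * prod_list w = s \<and> length w = k"
proof -
  let ?A = "(\<lambda>w. enat (length w)) ` {w. set w \<subseteq> X \<and> x * prod_list w = s}"
  have "?A \<noteq> {}"
  proof
    assume "?A = {}"
    then have "word_dist X x s = \<infinity>" unfolding word_dist_def by (simp add: Inf_enat_def)
    then show False using assms by simp
  qed
  then obtain a where "a \<in> ?A" by blast
  then have "Inf ?A \<in> ?A" unfolding Inf_enat_def by (simp only: if_False \<open>?A \<noteq> {}\<close>) (rule LeastI)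
  then show ?thesis using assms unfolding word_dist_def by auto
qed

lemma wd_self: "word_dist Y y y = 0"
proof -
  have "word_dist Y y y \<le> enat (length ([]::'a list))"
    unfolding word_dist_def by (rule INF_lower) auto
  then show ?thesis by (simp add: zero_enat_def[symmetric])
qed

lemma fiber_bound:
  fixes lam eps :: real
  assumes "1 \<le> lam" "0 < eps"
    and "ereal (1/lam) * ereal_of_enat d - ereal eps \<le> 0"
  shows "\<exists>k. d = enat k \<and> real k \<le> lam * eps"
proof (cases d)
  case (enat k)
  have "ereal (1/lam * real k - eps) \<le> 0" using assms(3) enat by simp
  then have "real k / lam \<le> eps" by simp
  then have "real k \<le> lam * eps" using assms(1) by (simp add: divide_le_eq mult.commute)
  then show ?thesis using enat by auto
next
  case infinity
  have "ereal (1/lam) > 0" using assms(1) by simp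
  then have "ereal (1/lam) * ereal_of_enat d = \<infinity>" using infinity by simp
  then show ?thesis using assms(3) by simp
qed

theorem lemma7p1:
  fixes X :: "'a::monoid_mult set" and Y :: "'b::monoid_mult set"
    and f :: "'a \<Rightarrow> 'b" and S :: "'a set"
  assumes "finite X" and "generated_by X"
    and "finite Y" and "generated_by Y"
    and "qi_embedding X Y f"
    and "infinite S"
  shows "infinite (f ` S)"
proof
  assume fin: "finite (f ` S)"
  obtain lam eps :: real where le: "1 \<le> lam" "0 < eps" and qi:
    "\<And>x y. ereal (1/lam) * ereal_of_enat (word_dist X x y) - ereal eps
               \<le> ereal_of_enat (word_dist Y (f x) (f y))"
    using assms(5) unfolding qi_embedding_def by blast
  have "S = (\<Union>y\<in>f ` S. S \<inter> f -` {y})" by auto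
  then obtain y where y: "y \<in> f ` S" and inf: "infinite (S \<inter> f -` {y})"
    using fin assms(6) by (metis finite_UN_I)
  then obtain x0 where x0: "x0 \<in> S" "f x0 = y" by auto
  define N where "N = nat \<lceil>lam * eps\<rceil>"
  have "S \<inter> f -` {y} \<subseteq> (\<lambda>w. x0 * prod_list w) ` {w. set w \<subseteq> X \<and> length w \<le> N}"
  proof
    fix s assume s: "s \<in> S \<inter> f -` {y}"
    have "ereal (1/lam) * ereal_of_enat (word_dist X x0 s) - ereal eps \<le> 0"
      using qi[of x0 s] s x0 by (simp add: wd_self)
    then obtain k where k: "word_dist X x0 s = enat k" "real k \<le> lam * eps"
      using fiber_bound le by blast
    then obtain w where w: "set w \<subseteq> X" "x0 * prod_list w = s" "length w = k"
      using wd_attain by blast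
    have "k \<le> N" using k(2) unfolding N_def by linarith
    then show "s \<in> (\<lambda>w. x0 * prod_list w) ` {w. set w \<subseteq> X \<and> length w \<le> N}"
      using w by force
  qed
  moreover have "finite {w. set w \<subseteq> X \<and> length w \<le> N}"
    using finite_lists_length_le[OF assms(1)] by simp
  ultimately show False using inf by (meson finite_imageI finite_subset)
qed

end
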